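(* For every positive integer $n$, the number $J_n$ of vectors $(\delta_0,\ldots,\delta_n)\in\{-1,1\}^{n+1}$ with $\sum_{i=0}^n\delta_i\binom{n}{i}=0$ equals the number $x_n$ of arrays $(a_0,\ldots,a_n)\in\{0,1\}^{n+1}$ whose $n$-th difference is zero, i.e. with $\sum_{t=0}^n\binom{n}{t}(-1)^t a_{n-t}=0$.
   Context: For a list $L=[a_0,\ldots,a_n]$ the first difference is $\Delta(L)=[a_1-a_0,\ldots,a_n-a_{n-1}]$ and $\Delta^k=\Delta(\Delta^{k-1})$; the $n$-th difference of a list of $n+1$ elements is the single number $\sum_{t=0}^n\binom{n}{t}(-1)^ta_{n-t}$. *)

theory Defs
  imports Main
begin

definition J :: "nat \<Rightarrow> nat" where
  "J n = card {d :: int list. length d = n + 1 \<and> set d \<subseteq> {-1, 1} \<and>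
      (\<Sum>i=0..n. d ! i * int (n choose i)) = 0}"

definition x :: "nat \<Rightarrow> nat" where
  "x n = card {a :: int list. length a = n + 1 \<and> set a \<subseteq> {0, 1} \<and>
      (\<Sum>t=0..n. int (n choose t) * (-1) ^ t * a ! (n - t)) = 0}"

end

theory Submission
  imports Defs
begin

lemma sign_cases: "(s::int) \<in> {-1,1} \<Longrightarrow> (-1::int)^t * s \<in> {-1,1}"
  by (cases "even t") auto

lemma mem_helper: "length l = Suc n \<Longrightarrow> set l \<subseteq> A \<Longrightarrow> t \<le> n \<Longrightarrow> l!t \<in> A"
  by (metis less_Suc_eq_le nth_mem subsetD)

lemma upt_nth_helper: "t \<le> n \<Longrightarrow> [0..<Suc n] ! (n-t) = n-t"
  by (simp del: upt_Suc)

lemma nth_map_upt': "k < Suc n \<Longrightarrow> map h [0..<Suc n] ! k = h k"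
  by (simp del: upt_Suc)

lemma key_sum:
  fixes n :: nat and d a :: "int list"
  assumes n: "n \<ge> 1"
  and rel: "\<And>t. t \<le> n \<Longrightarrow> d ! t = (-1)^t * (2 * a ! (n - t) - 1)"
  shows "(\<Sum>i=0..n. d ! i * int (n choose i)) =
         2 * (\<Sum>t=0..n. int (n choose t) * (-1) ^ t * a ! (n - t))"
proof -
  have "(\<Sum>i=0..n. d ! i * int (n choose i)) =
        (\<Sum>t=0..n. 2 * (int (n choose t) * (-1) ^ t * a ! (n - t)) - (-1)^t * int (n choose t))"
    by (rule sum.cong) (auto simp: rel algebra_simps)
  also have "\<dots> = 2 * (\<Sum>t=0..n. int (n choose t) * (-1) ^ t * a ! (n - t))
      - (\<Sum>t=0..n. (-1)^t * int (n choose t))"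
    by (simp add: sum_subtractf sum_distrib_left)
  also have "(\<Sum>t=0..n. (-1)^t * int (n choose t)) = 0"
    using choose_alternating_sum[of n, where 'a=int] n by (simp add: atLeast0AtMost)
  finally show ?thesis by simp
qed

theorem mainTheorem4:
  fixes n :: nat
  assumes "n \<ge> 1"
  shows "J n = x n"
proof -
  define S where "S = {d :: int list. length d = n + 1 \<and> set d \<subseteq> {-1, 1} \<and>
      (\<Sum>i=0..n. d ! i * int (n choose i)) = 0}"
  define T where "T = {a :: int list. length a = n + 1 \<and> set a \<subseteq> {0, 1} \<and>
      (\<Sum>t=0..n. int (n choose t) * (-1) ^ t * a ! (n - t)) = 0}"
  define f where "f d = map (\<lambda>j. (1 + (-1)^(n-j) * d!(n-j)) div 2) [0..<Suc n]" for d :: "int list"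
  define g where "g a = map (\<lambda>t. (-1)^t * (2 * a!(n-t) - 1)) [0..<Suc n]" for a :: "int list"
  have fnth: "f d ! (n - t) = (1 + (-1)^t * d!t) div 2" if t: "t \<le> n" for t d
  proof -
    have "f d ! (n - t) = (\<lambda>j. (1 + (-1)^(n-j) * d!(n-j)) div 2) (n - t)"
      unfolding f_def by (rule nth_map_upt') (use t in simp)
    thus ?thesis using t by simp
  qed
  have gnth: "g a ! t = (-1)^t * (2 * a!(n-t) - 1)" if t: "t \<le> n" for t a
    unfolding g_def by (rule nth_map_upt') (use t in simp)
  have "bij_betw f S T"
  proof (rule bij_betw_byWitness[where f'=g])
    show "\<forall>d\<in>S. g (f d) = d"
    proof
      fix d assume d: "d \<in> S"
      show "g (f d) = d"
      proof (rule nth_equalityI)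
        show "length (g (f d)) = length d" using d by (simp add: g_def S_def)
        fix t assume "t < length (g (f d))"
        hence t: "t \<le> n" by (simp add: g_def)
        have "d ! t \<in> {-1,1}" using d t by (intro mem_helper[of d n]) (auto simp: S_def)
        hence pm: "(-1::int)^t * d!t \<in> {-1,1}" by (rule sign_cases)
        have sq: "(-1::int)^t * (-1)^t = 1" by (metis minus_one_mult_self)
        have fv: "f d ! (n - t) = (1 + (-1)^t * d!t) div 2"
          using t by (rule fnth)
        have "2 * f d ! (n - t) - 1 = (-1)^t * d!t" using fv pm by auto
        hence "g (f d) ! t = (-1)^t * ((-1)^t * d!t)"
          using gnth[OF t] by simp
        also have "\<dots> = d ! t" using sq by (simp add: mult.assoc[symmetric])
        finally show "g (f d) ! t = d ! t" .
      qed
    qed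
    show "\<forall>a\<in>T. f (g a) = a"
    proof
      fix a assume a: "a \<in> T"
      show "f (g a) = a"
      proof (rule nth_equalityI)
        show "length (f (g a)) = length a" using a by (simp add: f_def T_def)
        fix j assume "j < length (f (g a))"
        hence j: "j \<le> n" by (simp add: f_def)
        have "a ! j \<in> {0,1}" using a j by (intro mem_helper[of a n]) (auto simp: T_def)
        moreover have "(-1::int)^(n-j) * (-1)^(n-j) = 1"
          by (metis minus_one_mult_self)
        moreover have "f (g a) ! j = (1 + (-1)^(n-j) * g a ! (n-j)) div 2"
          using fnth[of "n-j" "g a"] j by simp
        moreover have "g a ! (n-j) = (-1)^(n-j) * (2 * a!j - 1)"
          using gnth[of "n-j" a] j by simp
        ultimately show "f (g a) ! j = a ! j"
          by (auto simp: mult.assoc[symmetric])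
      qed
    qed
    show "f ` S \<subseteq> T"
    proof
      fix e assume "e \<in> f ` S"
      then obtain d where d: "d \<in> S" and e: "e = f d" by auto
      have vals: "\<And>t. t \<le> n \<Longrightarrow> e ! (n - t) = (1 + (-1)^t * d!t) div 2"
      proof -
        fix t assume t: "t \<le> n"
        show "e ! (n - t) = (1 + (-1)^t * d!t) div 2"
          using e t fnth by simp
      qed
      have pm: "\<And>t. t \<le> n \<Longrightarrow> (-1::int)^t * d!t \<in> {-1,1}"
        using d by (intro sign_cases mem_helper[of d n]) (auto simp: S_def)
      have "\<forall>j\<le>n. e ! j \<in> {0,1}"
      proof (intro allI impI)
        fix j assume j: "j \<le> n"
        have "e ! j = e ! (n - (n - j))" using j by simp
        also have "\<dots> = (1 + (-1)^(n-j) * d!(n-j)) div 2" using vals[of "n-j"] j by simp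
        finally show "e ! j \<in> {0,1}" using pm[of "n-j"] by auto
      qed
      hence set: "set e \<subseteq> {0,1}" using e by (auto simp: f_def set_conv_nth less_Suc_eq_le)
      have rel: "\<And>t. t \<le> n \<Longrightarrow> d ! t = (-1)^t * (2 * e ! (n - t) - 1)"
      proof -
        fix t assume t: "t \<le> n"
        have sq: "(-1::int)^t * (-1)^t = 1" by (metis minus_one_mult_self)
        have "2 * e ! (n - t) - 1 = (-1)^t * d!t" using vals[OF t] pm[OF t] by auto
        hence "(-1)^t * (2 * e ! (n - t) - 1) = ((-1)^t * (-1)^t) * d!t" by (simp add: mult.assoc)
        thus "d ! t = (-1)^t * (2 * e ! (n - t) - 1)" using sq by simp
      qed
      have "(\<Sum>t=0..n. int (n choose t) * (-1) ^ t * e ! (n - t)) = 0"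
        using key_sum[OF assms rel] d by (simp add: S_def)
      thus "e \<in> T" using set e by (simp add: T_def f_def)
    qed
    show "g ` T \<subseteq> S"
    proof
      fix e assume "e \<in> g ` T"
      then obtain a where a: "a \<in> T" and e: "e = g a" by auto
      have rel: "\<And>t. t \<le> n \<Longrightarrow> e ! t = (-1)^t * (2 * a ! (n - t) - 1)"
        using e gnth by simp
      have "\<forall>t\<le>n. e ! t \<in> {-1,1}"
      proof (intro allI impI)
        fix t assume t: "t \<le> n"
        have "a ! (n - t) \<in> {0,1}" using a t by (intro mem_helper[of a n]) (auto simp: T_def)
        hence "2 * a ! (n - t) - 1 \<in> {-1,1}" by auto
        thus "e ! t \<in> {-1,1}" using rel[OF t] sign_cases by metis
      qed
      hence set: "set e \<subseteq> {-1,1}" using e by (auto simp: g_def set_conv_nth less_Suc_eq_le)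
      have "(\<Sum>i=0..n. e ! i * int (n choose i)) = 0"
        using key_sum[OF assms rel] a by (simp add: T_def)
      thus "e \<in> S" using set e by (simp add: S_def g_def)
    qed
  qed
  hence "card S = card T" by (rule bij_betw_same_card)
  thus ?thesis by (simp add: J_def x_def S_def T_def)
qed

end
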